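(* Let $k$ and $r$ be positive integers such that $r \mid k$ and $k \ge 2r$. Let $\chi : \{1, 2, \ldots, rk-2r+1\} \to \{0,1\}$ be a 2-coloring such that $\chi(1) = 0$ and, if $r \ge 2$, $\chi(r-1) = 0$. Then there exists a solution $(\hat{x}_1, \ldots, \hat{x}_k)$ of the equation $x_1 + \cdots + x_{k-1} = x_k$ with all $\hat{x}_i \in \{1, \ldots, rk-2r+1\}$ such that $\sum_{i=1}^k \chi(\hat{x}_i) \equiv 0 \pmod r$.
   Context: Solutions of the equation $x_1 + \cdots + x_{k-1} = x_k$ are taken in positive integers. A solution $(\hat{x}_1,\ldots,\hat{x}_k)$ is called $r$-zero-sum under $\chi$ if $\sum_{i=1}^k \chi(\hat{x}_i) \equiv 0 \pmod r$. *)

theory Defs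
  imports Main
begin

end

theory Submission
  imports Defs
begin

lemma pw_sum:
  fixes g :: "nat \<Rightarrow> nat"
  assumes "m1 + m2 \<le> n"
    and "\<And>i. i \<le> n \<Longrightarrow> g i = (if i \<le> m1 then A else if i \<le> m1 + m2 then B else C)"
  shows "(\<Sum>i=1..n. g i) = m1 * A + m2 * B + (n - m1 - m2) * C"
proof -
  have s1: "(\<Sum>i=1..n. g i) = (\<Sum>i=1..m1 + m2. g i) + (\<Sum>i=m1+m2+1..n. g i)"
    using sum.ub_add_nat[of 1 "m1+m2" g "n - (m1+m2)"] assms(1) by simp
  have s2: "(\<Sum>i=1..m1 + m2. g i) = (\<Sum>i=1..m1. g i) + (\<Sum>i=m1+1..m1+m2. g i)"
    using sum.ub_add_nat[of 1 "m1" g "m2"] by simp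
  have a: "(\<Sum>i=1..m1. g i) = m1 * A"
  proof -
    have "(\<Sum>i=1..m1. g i) = (\<Sum>i=1..m1. A)"
      by (rule sum.cong) (use assms in auto)
    then show ?thesis by simp
  qed
  have b: "(\<Sum>i=m1+1..m1+m2. g i) = m2 * B"
  proof -
    have "(\<Sum>i=m1+1..m1+m2. g i) = (\<Sum>i=m1+1..m1+m2. B)"
      by (rule sum.cong) (use assms in auto)
    then show ?thesis by simp
  qed
  have c: "(\<Sum>i=m1+m2+1..n. g i) = (n - m1 - m2) * C"
  proof -
    have "(\<Sum>i=m1+m2+1..n. g i) = (\<Sum>i=m1+m2+1..n. C)"
      by (rule sum.cong) (use assms in auto)
    then show ?thesis by simp
  qed
  show ?thesis using s1 s2 a b c by simp
qed

lemma mk: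
  fixes \<chi> :: "nat \<Rightarrow> nat"
  assumes "k = n + 1" "m1 + m2 \<le> n"
    and "a \<in> {1..N}" "b \<in> {1..N}" "1 \<le> N" "T \<in> {1..N}"
    and "m1 * a + m2 * b + (n - m1 - m2) = T"
    and "(m1 * \<chi> a + m2 * \<chi> b + (n - m1 - m2) * \<chi> 1 + \<chi> T) mod r = 0"
  shows "\<exists>x :: nat \<Rightarrow> nat.
           (\<forall>i\<in>{1..k}. x i \<in> {1..N})
         \<and> (\<Sum>i=1..k-1. x i) = x k
         \<and> (\<Sum>i=1..k. \<chi> (x i)) mod r = 0"
proof -
  define x where "x = (\<lambda>i::nat. if i \<le> m1 then a else if i \<le> m1 + m2 then b else if i \<le> n then 1 else T)"
  have xs: "(\<Sum>i=1..n. x i) = m1 * a + m2 * b + (n - m1 - m2) * 1"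
    by (rule pw_sum) (use assms(2) in \<open>auto simp: x_def\<close>)
  have cs: "(\<Sum>i=1..n. \<chi> (x i)) = m1 * \<chi> a + m2 * \<chi> b + (n - m1 - m2) * \<chi> 1"
    by (rule pw_sum) (use assms(2) in \<open>auto simp: x_def\<close>)
  have xk: "x k = T" using assms(1,2) by (simp add: x_def)
  have "(\<Sum>i=1..k. \<chi> (x i)) = (\<Sum>i=1..n. \<chi> (x i)) + \<chi> (x k)"
    using assms(1) by simp
  then have c2: "(\<Sum>i=1..k. \<chi> (x i)) = m1 * \<chi> a + m2 * \<chi> b + (n - m1 - m2) * \<chi> 1 + \<chi> T"
    using cs xk by simp
  have r1: "\<forall>i\<in>{1..k}. x i \<in> {1..N}" using assms by (auto simp: x_def)
  show ?thesis
    apply (rule exI[of _ x])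
    using r1 xs xk c2 assms by simp
qed

theorem lemma1:
  fixes k r :: nat and \<chi> :: "nat \<Rightarrow> nat"
  assumes "0 < k" and "0 < r" and "r dvd k" and "k \<ge> 2 * r"
    and "\<forall>n\<in>{1..r*k - 2*r + 1}. \<chi> n \<in> {0, 1}"
    and "\<chi> 1 = 0"
    and "r \<ge> 2 \<longrightarrow> \<chi> (r - 1) = 0"
  shows "\<exists>x :: nat \<Rightarrow> nat.
           (\<forall>i\<in>{1..k}. x i \<in> {1..r*k - 2*r + 1})
         \<and> (\<Sum>i=1..k-1. x i) = x k
         \<and> (\<Sum>i=1..k. \<chi> (x i)) mod r = 0"
proof -
  define N where "N = r*k - 2*r + 1"
  define n where "n = k - 1"
  have kn: "k = n + 1" using assms(1) n_def by simp
  have Nv: "N = (r - 1) * (k - 2) + k - 1"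
    using assms(2,4) unfolding N_def by (cases r) (auto simp: algebra_simps)
  have kN: "k - 1 \<le> N" using Nv by simp
  have rng: "\<And>v. 1 \<le> v \<Longrightarrow> v \<le> N \<Longrightarrow> \<chi> v = 0 \<or> \<chi> v = 1"
    using assms(5) unfolding N_def by auto
  have allones: "\<chi> (k - 1) mod r = 0 \<Longrightarrow> ?thesis"
    using mk[of k n 0 0 1 N 1 "k-1" \<chi> r] kn kN assms(1,2,4,6) unfolding N_def n_def
    by auto
  show ?thesis
  proof (cases "\<chi> (k - 1) = 0 \<or> r = 1")
    case True
    then show ?thesis using allones by auto
  next
    case False
    then have r2: "r \<ge> 2" and ck: "\<chi> (k - 1) = 1"
      using assms(2) rng[of "k-1"] kN assms(4) by auto
    obtain s where rs: "r = s + 2" using r2 by (metis add.commute le_Suc_ex)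
    have ex: "1 \<le> k - 1 \<and> \<chi> (k - 1) \<noteq> 0" using ck assms(4) r2 by auto
    define t where "t = (LEAST v. 1 \<le> v \<and> \<chi> v \<noteq> 0)"
    have tP: "1 \<le> t \<and> \<chi> t \<noteq> 0" unfolding t_def by (rule LeastI[of _ "k-1"]) (rule ex)
    have tk: "t \<le> k - 1" unfolding t_def by (rule Least_le) (rule ex)
    have below: "\<And>v. 1 \<le> v \<Longrightarrow> v < t \<Longrightarrow> \<chi> v = 0"
      using not_less_Least t_def by blast
    have t1: "t \<noteq> 1" using tP assms(6) by auto
    have ct: "\<chi> t = 1" using rng[of t] tP tk kN by auto
    show ?thesis
    proof (cases "t \<ge> 3")
      case True
      obtain u where tu: "t = u + 3" using True by (metis add.commute le_Suc_ex)
      define p where "p = n + (r - 1) * (t - 1)"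
      have pN: "p \<le> N"
      proof -
        have h: "(r - 1) * (t - 1) \<le> (r - 1) * (k - 2)" using tk by (intro mult_le_mono) auto
        have "(r - 1) * (k - 2) + k - 1 = (r - 1) * (k - 2) + (k - 1)" using assms(1) by simp
        then show ?thesis unfolding p_def Nv n_def using h by linarith
      qed
      have p1: "1 \<le> p" unfolding p_def n_def using assms(4) r2 by simp
      have le1: "(r - 1) + 0 \<le> n" unfolding n_def using assms(4) by simp
      have le2: "(r - 1) + (r - 1) \<le> n" unfolding n_def using assms(4) by simp
      have tN: "t \<le> N" using tk kN by simp
      show ?thesis
      proof (cases "\<chi> p = 0")
        case True
        show ?thesis
          apply (fold N_def)
          apply (rule mk[of k n "r-1" "r-1" "t-1" N 2 p \<chi> r])
          using kn le2 tN True p1 pN below[of "t-1"] below[of 2] True tu assms(6)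
          unfolding N_def p_def by (auto simp: algebra_simps rs)
      next
        case False
        then have "\<chi> p = 1" using rng[of p] p1 pN by auto
        show ?thesis
          apply (fold N_def)
          apply (rule mk[of k n "r-1" 0 t N 1 p \<chi> r])
          using kn le1 tN p1 pN ct \<open>\<chi> p = 1\<close> tu assms(6)
          unfolding N_def p_def by (auto simp: algebra_simps rs)
      qed
    next
      case False
      then have t2: "t = 2" using tP t1 by auto
      have c2: "\<chi> 2 = 1" using ct t2 by simp
      have kNa: "k - 1 \<in> {1..N}" using kN assms(4) r2 by auto
      show ?thesis
      proof (cases "r = 2")
        case True
        have k4: "k \<ge> 4" using assms(4) True by simp
        have NN: "N = 2 * k - 3" unfolding N_def True using k4 by simp
        have N1: "1 \<le> N" "2 \<le> N" using NN assms(4) True by auto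
        have k4e: "Suc (2 * k - 4) = 2 * k - 3" "k - 1 + (k - 2) = 2 * k - 3" using k4 by auto
        have ev: "even k" using assms(3) True by simp
        show ?thesis
        proof (cases "\<chi> N = 0")
          case c0: True
          have "even (k - 2)" using ev assms(4) True by auto
          then have "(k - 2) mod 2 = 0" by presburger
          then show ?thesis
            apply (fold N_def)
            apply (rule mk[of k n "k-2" 0 2 N 1 N \<chi> r])
            using kn N1 NN c0 c2 assms(4,6) True k4 k4e unfolding N_def n_def by auto
        next
          case c1: False
          then have "\<chi> N = 1" using rng[of N] N1 by auto
          then show ?thesis
            apply (fold N_def)
            apply (rule mk[of k n 1 0 "k-1" N 1 N \<chi> r])
            using kn N1 NN kNa ck assms(4,6) True k4 k4e unfolding N_def n_def by auto
        qed
      next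
        case False
        have r3: "r \<noteq> 3" using c2 assms(7) by auto
        then have r4: "r \<ge> 4" using False r2 by auto
        define T where "T = 2 * k + r - 5"
        have TN: "T \<le> N"
        proof -
          have "(r - 2) * 3 \<le> (r - 2) * k" using assms(4) r4 by (intro mult_le_mono) auto
          then show ?thesis unfolding T_def N_def using r4 assms(4)
            by (simp add: algebra_simps diff_mult_distrib diff_mult_distrib2)
        qed
        have T1: "1 \<le> T" unfolding T_def using r4 assms(4) by simp
        have N2: "2 \<le> N" "r - 1 \<le> N" using TN unfolding T_def using assms(4) r4 by auto
        show ?thesis
        proof (cases "\<chi> T = 0")
          case c0: True
          have "r dvd (k - r)" using assms(3) by (simp add: dvd_diff_nat)
          then have "(k - r) mod r = 0" by simp
          then show ?thesis
            apply (fold N_def)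
            apply (rule mk[of k n 2 "k - r" "r - 1" N 2 T \<chi> r])
            using kn N2 TN T1 c0 c2 assms(4,6,7) r4 unfolding n_def T_def by auto
        next
          case c1: False
          then have "\<chi> T = 1" using rng[of T] T1 TN by auto
          have rr: "(1 * \<chi> (k - 1) + (r - 2) * \<chi> 2 + (n - 1 - (r - 2)) * \<chi> 1 + \<chi> T) mod r = 0"
          proof -
            have "Suc (Suc (r - 2)) = r" using r4 by simp
            then show ?thesis using ck c2 assms(6) \<open>\<chi> T = 1\<close> by simp
          qed
          then show ?thesis
            apply (fold N_def)
            apply (rule mk[of k n 1 "r - 2" "k-1" N 2 T \<chi> r])
            using kn N2 TN T1 kNa c2 ck assms(4,6) r4 rr unfolding n_def T_def by auto
        qed
      qed
    qed
  qed
qed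

end
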